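(* Let $X=\{x_1,\dots,x_t\}$ with $x_1<x_2<\dots<x_t$, and let $x=(x_{i_1},\dots,x_{i_m})$ be a time series with values in $X$ satisfying $\mathrm{set}(x)=X$. Let $Y=\{y_1,\dots,y_t\}$ with $y_1<y_2<\dots<y_t$, and let $y=(y_{i_1},\dots,y_{i_m})$ (with the same index sequence $i_1,\dots,i_m$) be a time series with values in $Y$ satisfying $\mathrm{set}(y)=Y$. Then for every $\ell\in\mathbb{N}$, $D_{(x,\ell)}=D_{(y,\ell)}$.
   Context: A time series of complexity $m$ is a vector in $\mathbb{R}^m$; $\mathrm{set}(x)$ is the set of entries of $x$, and $\mathrm{rank}_x(z)$ is the rank of $z\in\mathrm{set}(x)$ in $\mathrm{set}(x)$ (ordered increasingly). For $x\in\mathbb{R}^m$ and $y\in\mathbb{R}^\ell$, a traversal is a sequence of index pairs $(i,j)\in[m]\times[\ell]$ starting at $(1,1)$, ending at $(m,\ell)$, in which each pair $(i,j)$ is followed by one of $(i,j+1)$, $(i+1,j)$, $(i+1,j+1)$; $x_i$ and $y_j$ are matched if $(i,j)$ occurs in it. For a traversal $M$ of $x$ with a time series of complexity $\ell$, the traversal sectors are $S^{(x,M)}_j=\{x_i: x_i \text{ matched with the } j\text{-th vertex by } M\}$, $j\in[\ell]$, and the $\ell$-profile of $(x,M)$ is $\big((\mathrm{rank}_x(\min S^{(x,M)}_j),\mathrm{rank}_x(\max S^{(x,M)}_j))\big)_{j=1}^{\ell}$. $D_{(x,\ell)}$ is the set of all $\ell$-profiles of $(x,M)$ over all such traversals $M$.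 *)

theory Defs
  imports Complex_Main
begin

(* Time series of complexity m: a real list of length m.  Indices are 0-based:
   position i of the list corresponds to the paper's index i+1. *)

definition rank_ts :: "real list \<Rightarrow> real \<Rightarrow> nat" where
  "rank_ts x z = card {w \<in> set x. w \<le> z}"

definition is_traversal :: "nat \<Rightarrow> nat \<Rightarrow> (nat \<times> nat) list \<Rightarrow> bool" where
  "is_traversal m l M \<longleftrightarrow>
     M \<noteq> [] \<and> 0 < m \<and> 0 < l \<and>
     hd M = (0, 0) \<and> last M = (m - 1, l - 1) \<and>
     (\<forall>p \<in> set M. fst p < m \<and> snd p < l) \<and>
     (\<forall>k. Suc k < length M \<longrightarrow>
        (let (i, j) = M ! k in
           M ! Suc k = (i, Suc j) \<or> M ! Suc k = (Suc i, j) \<or> M ! Suc k = (Suc i, Suc j)))"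

definition sector :: "real list \<Rightarrow> (nat \<times> nat) list \<Rightarrow> nat \<Rightarrow> real set" where
  "sector x M j = {x ! i | i. (i, j) \<in> set M}"

definition profile :: "real list \<Rightarrow> nat \<Rightarrow> (nat \<times> nat) list \<Rightarrow> (nat \<times> nat) list" where
  "profile x l M = map (\<lambda>j. (rank_ts x (Min (sector x M j)), rank_ts x (Max (sector x M j)))) [0..<l]"

definition profiles :: "real list \<Rightarrow> nat \<Rightarrow> (nat \<times> nat) list set" where
  "profiles x l = {profile x l M | M. is_traversal (length x) l M}"

end

theory Submission
  imports Defs
begin

lemma trav_cover:
  assumes "is_traversal m l M" "k < length M" "j \<le> snd (M ! k)"
  shows "\<exists>k'\<le>k. snd (M ! k') = j"
  using assms(2,3)
proof (induction k arbitrary: j)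
  case 0
  then show ?case using assms(1) by (auto simp: is_traversal_def hd_conv_nth)
next
  case (Suc k)
  have st: "let (i, j) = M ! k in
           M ! Suc k = (i, Suc j) \<or> M ! Suc k = (Suc i, j) \<or> M ! Suc k = (Suc i, Suc j)"
    using assms(1) Suc.prems by (auto simp: is_traversal_def)
  show ?case
  proof (cases "j = snd (M ! Suc k)")
    case True then show ?thesis by auto
  next
    case False
    then have "j \<le> snd (M ! k)" using st Suc.prems by (auto split: prod.splits)
    then show ?thesis using Suc.IH Suc.prems by (meson Suc_lessD le_SucI)
  qed
qed

lemma trav_sector_ne:
  assumes "is_traversal m l M" "j < l"
  shows "\<exists>i. (i, j) \<in> set M"
proof -
  have "last M = M ! (length M - 1)" "length M - 1 < length M"
    using assms by (auto simp: is_traversal_def last_conv_nth)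
  moreover have "snd (last M) = l - 1" using assms by (auto simp: is_traversal_def)
  ultimately have "snd (M ! (length M - 1)) = l - 1" by simp
  then obtain k where "k \<le> length M - 1" "snd (M ! k) = j"
    using trav_cover[OF assms(1) \<open>length M - 1 < length M\<close>, of j] assms(2) by (metis Suc_pred' less_Suc_eq_le bot_nat_0.extremum_strict linorder_neqE_nat)
  then have "k < length M" "snd (M ! k) = j" using \<open>length M - 1 < length M\<close> by auto
  then show ?thesis by (metis nth_mem prod.collapse)
qed

lemma profile_eq:
  assumes len: "length x = length y"
    and g: "strict_mono_on (set x) g"
    and xy: "\<forall>i<length x. y ! i = g (x ! i)"
    and M: "is_traversal (length x) l M"
  shows "profile x l M = profile y l M"
proof -
  have sy: "set y = g ` set x"
  proof safe
    fix w assume "w \<in> set y"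
    then obtain i where "i < length y" "w = y ! i" by (auto simp: in_set_conv_nth)
    then show "w \<in> g ` set x" using len xy by auto
  next
    fix v assume "v \<in> set x"
    then obtain i where "i < length x" "v = x ! i" by (auto simp: in_set_conv_nth)
    then show "g v \<in> set y" using len xy by (metis nth_mem)
  qed
  have rk: "rank_ts y (g z) = rank_ts x z" if "z \<in> set x" for z
  proof -
    have inj: "inj_on g (set x)" using g strict_mono_on_imp_inj_on by blast
    have "{w \<in> set y. w \<le> g z} = g ` {w \<in> set x. w \<le> z}"
    proof safe
      fix w assume "w \<in> set y" "w \<le> g z"
      then obtain v where v: "v \<in> set x" "w = g v" using sy by auto
      have "v \<le> z"
      proof (rule ccontr)
        assume "\<not> v \<le> z" then have "z < v" by simp
        then have "g z < g v" using g v that by (auto simp: strict_mono_on_def)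
        then show False using \<open>w \<le> g z\<close> v by simp
      qed
      then show "w \<in> g ` {w \<in> set x. w \<le> z}" using v by auto
    next
      fix v assume "v \<in> set x" "v \<le> z"
      then show "g v \<in> set y" using sy by auto
      show "g v \<le> g z" using \<open>v \<le> z\<close> g \<open>v \<in> set x\<close> that
        unfolding strict_mono_on_def by (metis order_le_less order_refl)
    qed
    moreover have "inj_on g {w \<in> set x. w \<le> z}" using inj by (rule inj_on_subset) auto
    ultimately show ?thesis by (simp add: rank_ts_def card_image)
  qed
  have ind: "i < length x" if "(i, j) \<in> set M" for i j
    using M that by (auto simp: is_traversal_def)
  have sec: "sector y M j = g ` sector x M j" for j
  proof -
    have "sector y M j = {y ! i | i. (i, j) \<in> set M}" by (simp add: sector_def)
    also have "\<dots> = {g (x ! i) | i. (i, j) \<in> set M}"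
      using ind xy by metis
    also have "\<dots> = g ` sector x M j" by (auto simp: sector_def)
    finally show ?thesis .
  qed
  have secsub: "sector x M j \<subseteq> set x" for j
    unfolding sector_def using ind by auto
  have fin: "finite (sector x M j)" for j
    using secsub finite_subset by blast
  have mn: "Min (g ` S) = g (Min S)" "Max (g ` S) = g (Max S)"
    if "S \<subseteq> set x" "finite S" "S \<noteq> {}" for S
  proof -
    have le: "g a \<le> g b" if "a \<in> S" "b \<in> S" "a \<le> b" for a b
      using g that \<open>S \<subseteq> set x\<close> unfolding strict_mono_on_def by (metis order_le_less order_refl subsetD)
    show "Min (g ` S) = g (Min S)"
    proof (rule Min_eqI)
      show "finite (g ` S)" using that by simp
      show "g (Min S) \<in> g ` S" using that Min_in by blast
      fix w assume "w \<in> g ` S"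
      then obtain a where "a \<in> S" "w = g a" by blast
      then show "g (Min S) \<le> w" using le[of "Min S" a] that Min_in Min_le by blast
    qed
    show "Max (g ` S) = g (Max S)"
    proof (rule Max_eqI)
      show "finite (g ` S)" using that by simp
      show "g (Max S) \<in> g ` S" using that Max_in by blast
      fix w assume "w \<in> g ` S"
      then obtain a where "a \<in> S" "w = g a" by blast
      then show "w \<le> g (Max S)" using le[of a "Max S"] that Max_in Max_ge by blast
    qed
  qed
  show ?thesis
    unfolding profile_def
  proof (rule map_cong[OF refl])
    fix j assume "j \<in> set [0..<l]"
    then have "j < l" by simp
    then have ne: "sector x M j \<noteq> {}"
      using trav_sector_ne[OF M] by (auto simp: sector_def)
    have "Min (sector x M j) \<in> set x" "Max (sector x M j) \<in> set x"
      using ne fin secsub Min_in Max_in by blast+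
    then show "(rank_ts x (Min (sector x M j)), rank_ts x (Max (sector x M j))) =
          (rank_ts y (Min (sector y M j)), rank_ts y (Max (sector y M j)))"
      using sec mn[OF secsub fin ne] rk by simp
  qed
qed

theorem lemma4p5:
  fixes t :: nat and xv yv :: "nat \<Rightarrow> real" and idx :: "nat list" and x y :: "real list"
  assumes "strict_mono_on {1..t} xv"
    and "strict_mono_on {1..t} yv"
    and "set idx \<subseteq> {1..t}"
    and "x = map xv idx"
    and "set x = xv ` {1..t}"
    and "y = map yv idx"
    and "set y = yv ` {1..t}"
  shows "\<forall>l::nat. profiles x l = profiles y l"
proof
  fix l :: nat
  have len: "length x = length y" using assms(4,6) by simp
  have injx: "inj_on xv {1..t}" using assms(1) strict_mono_on_imp_inj_on by blast
  have injy: "inj_on yv {1..t}" using assms(2) strict_mono_on_imp_inj_on by blast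
  define g where "g = yv \<circ> the_inv_into {1..t} xv"
  define h where "h = xv \<circ> the_inv_into {1..t} yv"
  have gk: "g (xv k) = yv k" if "k \<in> {1..t}" for k
    using the_inv_into_f_f[OF injx that] by (simp add: g_def)
  have hk: "h (yv k) = xv k" if "k \<in> {1..t}" for k
    using the_inv_into_f_f[OF injy that] by (simp add: h_def)
  have ord: "a < b" if "a \<in> {1..t}" "b \<in> {1..t}" "f a < f b" "strict_mono_on {1..t} f"
    for a b and f :: "nat \<Rightarrow> real"
  proof (rule ccontr)
    assume "\<not> a < b"
    then have "b < a \<or> a = b" by auto
    moreover have "\<not> f b < f a" using that(3) by simp
    ultimately show False using that(1,2,3) that(4)[unfolded strict_mono_on_def, rule_format, of b a] by auto
  qed
  have gm: "strict_mono_on (set x) g"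
    unfolding strict_mono_on_def
  proof safe
    fix r s assume "r \<in> set x" "s \<in> set x" "r < s"
    then obtain a b where ab: "a \<in> {1..t}" "b \<in> {1..t}" "r = xv a" "s = xv b" using assms(5) by auto
    then have "a < b" using ord[OF ab(1,2) _ assms(1)] \<open>r < s\<close> by simp
    then show "g r < g s" using ab gk assms(2) unfolding strict_mono_on_def by simp
  qed
  have hm: "strict_mono_on (set y) h"
    unfolding strict_mono_on_def
  proof safe
    fix r s assume "r \<in> set y" "s \<in> set y" "r < s"
    then obtain a b where ab: "a \<in> {1..t}" "b \<in> {1..t}" "r = yv a" "s = yv b" using assms(7) by auto
    then have "a < b" using ord[OF ab(1,2) _ assms(2)] \<open>r < s\<close> by simp
    then show "h r < h s" using ab hk assms(1) unfolding strict_mono_on_def by simp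
  qed
  have xy: "\<forall>i<length x. y ! i = g (x ! i)"
  proof (intro allI impI)
    fix i assume i: "i < length x"
    then have "idx ! i \<in> {1..t}" using assms(3,4,6) nth_mem by (metis length_map subsetD)
    then show "y ! i = g (x ! i)" using i assms(4,6) gk by simp
  qed
  have yx: "\<forall>i<length y. x ! i = h (y ! i)"
  proof (intro allI impI)
    fix i assume i: "i < length y"
    then have "idx ! i \<in> {1..t}" using assms(3,4,6) nth_mem by (metis length_map subsetD)
    then show "x ! i = h (y ! i)" using i assms(4,6) hk by simp
  qed
  show "profiles x l = profiles y l"
    unfolding profiles_def
  proof safe
    fix M assume "is_traversal (length x) l M"
    then show "\<exists>M'. profile x l M = profile y l M' \<and> is_traversal (length y) l M'"
      using profile_eq[OF len gm xy] len by auto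
  next
    fix M assume "is_traversal (length y) l M"
    then show "\<exists>M'. profile y l M = profile x l M' \<and> is_traversal (length x) l M'"
      using profile_eq[OF len[symmetric] hm yx] len by auto
  qed
qed

end
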